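(* The Median mechanism $2$-approximates the complemented Gini index of utilities.
   Context: One facility is located on $[0,1]$; $n\ge1$ agents (any $n$) have locations $x_1\le\dots\le x_n$ in $[0,1]$. For a facility at $y$, agent $i$ has distance $d_i=|x_i-y|$ and utility $u_i=1-d_i$. The Gini index of utilities is $G_u=\frac{\sum_i\sum_j|u_i-u_j|}{2n\sum_i u_i}$ and the complemented Gini index is $1-G_u$. The Median mechanism locates the facility at $x_{\lceil n/2\rceil}$. For a mechanism $M$ and a maximization objective $O$, the approximation ratio is the supremum over all profiles $x$ (over all numbers of agents) of $\mathrm{OPT}(x)/O(M(x))$, where $\mathrm{OPT}(x)=\max_{y\in[0,1]}O(y)$; $M$ "$\alpha$-approximates" $O$ if this approximation ratio equals $\alpha$. *)

theory Defs
  imports Complex_Main "HOL-Library.Extended_Real"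
begin

definition valid_profile :: "nat \<Rightarrow> (nat \<Rightarrow> real) \<Rightarrow> bool" where
  "valid_profile n x \<longleftrightarrow> n \<ge> 1 \<and> (\<forall>i\<in>{1..n}. 0 \<le> x i \<and> x i \<le> 1)
     \<and> (\<forall>i j. 1 \<le> i \<and> i \<le> j \<and> j \<le> n \<longrightarrow> x i \<le> x j)"

definition util :: "(nat \<Rightarrow> real) \<Rightarrow> real \<Rightarrow> nat \<Rightarrow> real" where
  "util x y i = 1 - \<bar>x i - y\<bar>"

definition gini_util :: "nat \<Rightarrow> (nat \<Rightarrow> real) \<Rightarrow> real \<Rightarrow> real" where
  "gini_util n x y =
     (\<Sum>i\<in>{1..n}. \<Sum>j\<in>{1..n}. \<bar>util x y i - util x y j\<bar>)
     / (2 * real n * (\<Sum>i\<in>{1..n}. util x y i))"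

definition compl_gini :: "nat \<Rightarrow> (nat \<Rightarrow> real) \<Rightarrow> real \<Rightarrow> real" where
  "compl_gini n x y = 1 - gini_util n x y"

definition median_mech :: "nat \<Rightarrow> (nat \<Rightarrow> real) \<Rightarrow> real" where
  "median_mech n x = x (nat \<lceil>real n / 2\<rceil>)"

definition opt_cgini :: "nat \<Rightarrow> (nat \<Rightarrow> real) \<Rightarrow> real" where
  "opt_cgini n x = (SUP y\<in>{0..1}. compl_gini n x y)"

definition median_cgini_ratio :: ereal where
  "median_cgini_ratio =
     (SUP p\<in>{(n, x). valid_profile n x}.
        ereal (opt_cgini (fst p) (snd p) / compl_gini (fst p) (snd p) (median_mech (fst p) (snd p))))"

end

theory Submission
  imports Defs
begin

lemma core_sum:
  fixes I :: "nat set" and a b d :: "nat \<Rightarrow> real" and t s :: real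
  assumes fin: "finite I"
  and pair: "\<And>i j. i \<in> I \<Longrightarrow> j \<in> I \<Longrightarrow> \<bar>d i - d j\<bar> \<le> d i + d j + a i * a j * (2*t - 2*d i - 2*d j) + b i * b j * (2*s - 2*d i - 2*d j)"
  shows "(\<Sum>i\<in>I. \<Sum>j\<in>I. \<bar>d i - d j\<bar>) \<le>
     2 * real (card I) * sum d I - 4 * sum a I * (\<Sum>i\<in>I. a i * d i) - 4 * sum b I * (\<Sum>i\<in>I. b i * d i)
     + 2 * t * (sum a I)^2 + 2 * s * (sum b I)^2"
proof -
  have "(\<Sum>i\<in>I. \<Sum>j\<in>I. \<bar>d i - d j\<bar>) \<le> (\<Sum>i\<in>I. \<Sum>j\<in>I. d i + d j + a i * a j * (2*t - 2*d i - 2*d j) + b i * b j * (2*s - 2*d i - 2*d j))"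
    by (intro sum_mono pair)
  also have "\<dots> = (\<Sum>i\<in>I. \<Sum>j\<in>I. d i) + (\<Sum>i\<in>I. \<Sum>j\<in>I. d j)
      + 2*t*(\<Sum>i\<in>I. \<Sum>j\<in>I. a i * a j) - 2*(\<Sum>i\<in>I. \<Sum>j\<in>I. (a i * d i) * a j) - 2*(\<Sum>i\<in>I. \<Sum>j\<in>I. a i * (a j * d j))
      + 2*s*(\<Sum>i\<in>I. \<Sum>j\<in>I. b i * b j) - 2*(\<Sum>i\<in>I. \<Sum>j\<in>I. (b i * d i) * b j) - 2*(\<Sum>i\<in>I. \<Sum>j\<in>I. b i * (b j * d j))"
    by (simp add: sum.distrib sum_subtractf sum_distrib_left algebra_simps)
  also have "\<dots> = 2 * real (card I) * sum d I - 4 * sum a I * (\<Sum>i\<in>I. a i * d i) - 4 * sum b I * (\<Sum>i\<in>I. b i * d i)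
     + 2 * t * (sum a I)^2 + 2 * s * (sum b I)^2"
    using sum_distrib_right[of d I "real (card I)", symmetric]
    by (simp only: sum_product[symmetric]) (simp add: power2_eq_square algebra_simps)
  finally show ?thesis .
qed

lemma k_props:
  assumes "n \<ge> (1::nat)"
  shows "1 \<le> nat \<lceil>real n / 2\<rceil>" "nat \<lceil>real n / 2\<rceil> \<le> n"
    "2 * real (nat \<lceil>real n / 2\<rceil>) \<le> real n + 2"
    "real n \<le> 2 * real (nat \<lceil>real n / 2\<rceil>)"
proof -
  have c1: "real n / 2 \<le> real_of_int \<lceil>real n / 2\<rceil>" by (rule le_of_int_ceiling)
  have c2: "real_of_int \<lceil>real n / 2\<rceil> < real n / 2 + 1" using ceiling_correct by linarith
  have "0 < real n / 2" using assms by simp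
  then have pos: "0 < \<lceil>real n / 2\<rceil>" by simp
  have eq: "real (nat \<lceil>real n / 2\<rceil>) = real_of_int \<lceil>real n / 2\<rceil>" using pos by simp
  show "1 \<le> nat \<lceil>real n / 2\<rceil>" using pos by (simp add: Suc_le_eq)
  have "\<lceil>real n / 2\<rceil> \<le> int n" by (rule ceiling_le) simp
  then show "nat \<lceil>real n / 2\<rceil> \<le> n" by simp
  have g1: "2 * X \<le> real n + 2" if "X = Y" "Y < real n / 2 + 1" for X Y :: real
    using that by linarith
  have g2: "real n \<le> 2 * X" if "X = Y" "real n / 2 \<le> Y" for X Y :: real
    using that by linarith
  show "2 * real (nat \<lceil>real n / 2\<rceil>) \<le> real n + 2" by (rule g1[OF eq c2])
  show "real n \<le> 2 * real (nat \<lceil>real n / 2\<rceil>)" by (rule g2[OF eq c1])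
qed

lemma median_half:
  assumes vp: "valid_profile n x"
  shows "compl_gini n x (median_mech n x) \<ge> 1/2"
proof -
  define k where "k = nat \<lceil>real n / 2\<rceil>"
  have n1: "n \<ge> 1" and xb: "\<And>i. i \<in> {1..n} \<Longrightarrow> 0 \<le> x i \<and> x i \<le> 1"
    and mono: "\<And>i j. 1 \<le> i \<Longrightarrow> i \<le> j \<Longrightarrow> j \<le> n \<Longrightarrow> x i \<le> x j"
    using vp unfolding valid_profile_def by auto
  note kp = k_props[OF n1, folded k_def]
  define t where "t = x k"
  define s where "s = 1 - t"
  have kI: "k \<in> {1..n}" using kp by auto
  have t01: "0 \<le> t" "t \<le> 1" using xb[OF kI] t_def by auto
  define d where "d i = \<bar>x i - t\<bar>" for i
  define a where "a i = (if i < k then 1 else (0::real))" for i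
  define b where "b i = (if k < i then 1 else (0::real))" for i
  define I where "I = {1..n}"
  have finI: "finite I" unfolding I_def by simp
  have dL: "0 \<le> d i \<and> d i \<le> t" if "i \<in> I" "i \<le> k" for i
    using xb[of i] mono[of i k] that kp unfolding d_def t_def I_def by auto
  have dR: "0 \<le> d i \<and> d i \<le> s" if "i \<in> I" "k \<le> i" for i
    using xb[of i] mono[of k i] that kp unfolding d_def t_def s_def I_def by auto
  have pair: "\<bar>d i - d j\<bar> \<le> d i + d j + a i * a j * (2*t - 2*d i - 2*d j) + b i * b j * (2*s - 2*d i - 2*d j)"
    if "i \<in> I" "j \<in> I" for i j
  proof (cases "i < k \<and> j < k")
    case True
    then show ?thesis using dL[OF that(1)] dL[OF that(2)] unfolding a_def b_def by auto
  next
    case f1: False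
    show ?thesis
    proof (cases "k < i \<and> k < j")
      case True
      then show ?thesis using dR[OF that(1)] dR[OF that(2)] unfolding a_def b_def by auto
    next
      case False
      then have ab: "a i * a j = 0" and bb: "b i * b j = 0" using f1 unfolding a_def b_def by auto
      have "\<bar>d i - d j\<bar> \<le> d i + d j" unfolding d_def by auto
      then show ?thesis by (simp only: ab bb mult_zero_left add_0_right)
    qed
  qed
  note core = core_sum[OF finI pair]
  define P where "P = sum a I"
  define Q where "Q = sum b I"
  define A where "A = (\<Sum>i\<in>I. a i * d i)"
  define B where "B = (\<Sum>i\<in>I. b i * d i)"
  define D where "D = sum d I"
  define F where "F = (\<Sum>i\<in>I. \<Sum>j\<in>I. \<bar>d i - d j\<bar>)"
  have cardI: "card I = n" unfolding I_def by simp
  have "P = real (card (I \<inter> {i. i < k}))" unfolding P_def a_def by (simp add: sum.If_cases finI)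
  also have "I \<inter> {i. i < k} = {1..<k}" unfolding I_def using kp by auto
  finally have P_eq: "P = real (k - 1)" by simp
  have "Q = real (card (I \<inter> {i. k < i}))" unfolding Q_def b_def by (simp add: sum.If_cases finI)
  also have "I \<inter> {i. k < i} = {k<..n}" unfolding I_def using kp by auto
  finally have Q_eq: "Q = real (n - k)" by simp
  have P_b: "0 \<le> P" "2 * P \<le> real n" using P_eq kp by auto
  have Q_b: "0 \<le> Q" "2 * Q \<le> real n" using Q_eq kp by auto
  have A_b: "0 \<le> A" "A \<le> t * P"
  proof -
    show "0 \<le> A" unfolding A_def a_def d_def by (intro sum_nonneg) auto
    have "A \<le> (\<Sum>i\<in>I. a i * t)" unfolding A_def
      by (intro sum_mono) (use dL in \<open>auto simp: a_def\<close>)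
    also have "\<dots> = t * P" unfolding P_def by (simp add: sum_distrib_left mult.commute)
    finally show "A \<le> t * P" .
  qed
  have B_b: "0 \<le> B" "B \<le> s * Q"
  proof -
    show "0 \<le> B" unfolding B_def b_def d_def by (intro sum_nonneg) auto
    have "B \<le> (\<Sum>i\<in>I. b i * s)" unfolding B_def
      by (intro sum_mono) (use dR in \<open>auto simp: b_def\<close>)
    also have "\<dots> = s * Q" unfolding Q_def by (simp add: sum_distrib_left mult.commute)
    finally show "B \<le> s * Q" .
  qed
  have D_eq: "D = A + B"
  proof -
    have "D = (\<Sum>i\<in>I. a i * d i + b i * d i)" unfolding D_def
    proof (intro sum.cong refl)
      fix i assume "i \<in> I"
      show "d i = a i * d i + b i * d i"
      proof (cases "i = k")
        case True
        then show ?thesis by (simp add: d_def t_def)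
      next
        case False
        then show ?thesis by (cases "i < k") (auto simp: a_def b_def)
      qed
    qed
    then show ?thesis unfolding A_def B_def by (simp add: sum.distrib)
  qed
  have core2: "F \<le> 2 * real n * D - 4 * P * A - 4 * Q * B + 2 * t * P^2 + 2 * s * Q^2"
    using core unfolding F_def P_def Q_def A_def B_def D_def cardI .
  have ident: "real n ^ 2 - (2 * real n * D - 4 * P * A - 4 * Q * B + 2 * t * P^2 + 2 * s * Q^2 + real n * D)
     = (3 * real n - 4 * P) * (t * P - A) + (3 * real n - 4 * Q) * (s * Q - B)
       + t * ((real n - P) * (real n - 2 * P)) + s * ((real n - Q) * (real n - 2 * Q))"
    unfolding D_eq s_def by (simp add: algebra_simps power2_eq_square)
  have "0 \<le> (3 * real n - 4 * P) * (t * P - A)" using P_b A_b by (intro mult_nonneg_nonneg) auto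
  moreover have "0 \<le> (3 * real n - 4 * Q) * (s * Q - B)" using Q_b B_b by (intro mult_nonneg_nonneg) auto
  moreover have "0 \<le> t * ((real n - P) * (real n - 2 * P))" using P_b t01 by (intro mult_nonneg_nonneg) auto
  moreover have "0 \<le> s * ((real n - Q) * (real n - 2 * Q))" using Q_b t01 s_def by (intro mult_nonneg_nonneg) auto
  ultimately have key: "F + real n * D \<le> real n ^ 2" using ident core2 by linarith
  have ud: "util x t i = 1 - d i" for i unfolding util_def d_def by simp
  have num: "(\<Sum>i\<in>I. \<Sum>j\<in>I. \<bar>util x t i - util x t j\<bar>) = F"
    unfolding F_def ud by (intro sum.cong refl) (simp add: abs_minus_commute)
  have den: "(\<Sum>i\<in>I. util x t i) = real n - D"
    unfolding ud D_def by (simp add: sum_subtractf cardI)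
  have "util x t k \<le> (\<Sum>i\<in>I. util x t i)"
  proof (rule member_le_sum)
    show "k \<in> I" using kI I_def by simp
    show "finite I" by (rule finI)
    fix i assume "i \<in> I - {k}"
    then have "0 \<le> x i" "x i \<le> 1" using xb I_def by auto
    then show "0 \<le> util x t i" unfolding util_def using t01 by auto
  qed
  then have Spos: "1 \<le> real n - D" using den by (simp add: util_def t_def)
  have med: "median_mech n x = t" by (simp add: median_mech_def t_def k_def)
  have npos: "0 < real n" using n1 by simp
  have "F \<le> (1/2) * (2 * real n * (real n - D))" using key by (simp add: algebra_simps power2_eq_square)
  then have "F / (2 * real n * (real n - D)) \<le> 1/2"
    using npos Spos by (subst pos_divide_le_eq) auto
  then have "gini_util n x t \<le> 1/2" unfolding gini_util_def
    using num den I_def by simp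
  then show ?thesis unfolding compl_gini_def med by simp
qed

lemma cg_le1:
  assumes vp: "valid_profile n x" and y: "y \<in> {0..1}"
  shows "compl_gini n x y \<le> 1"
proof -
  have xb: "\<And>i. i \<in> {1..n} \<Longrightarrow> 0 \<le> x i \<and> x i \<le> 1"
    using vp unfolding valid_profile_def by auto
  have "0 \<le> (\<Sum>i\<in>{1..n}. util x y i)"
  proof (intro sum_nonneg)
    fix i assume "i \<in> {1..n}"
    then have "0 \<le> x i" "x i \<le> 1" using xb by auto
    then show "0 \<le> util x y i" using y by (auto simp: util_def abs_le_iff)
  qed
  then have "0 \<le> gini_util n x y" unfolding gini_util_def
    by (intro divide_nonneg_nonneg sum_nonneg) auto
  then show ?thesis unfolding compl_gini_def by simp
qed

lemma opt_le1:
  assumes vp: "valid_profile n x"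
  shows "opt_cgini n x \<le> 1"
  unfolding opt_cgini_def by (rule cSUP_least) (auto intro: cg_le1[OF vp])

lemma ratio_le2:
  assumes vp: "valid_profile n x"
  shows "opt_cgini n x / compl_gini n x (median_mech n x) \<le> 2"
proof -
  have h: "1/2 \<le> compl_gini n x (median_mech n x)" by (rule median_half[OF vp])
  have "opt_cgini n x \<le> 2 * compl_gini n x (median_mech n x)" using h opt_le1[OF vp] by linarith
  then show ?thesis using h by (subst pos_divide_le_eq) auto
qed

definition xex :: "nat \<Rightarrow> real" where "xex i = (if i \<le> 1 then 0 else 1)"

lemma xex_valid: "valid_profile 2 xex"
  unfolding valid_profile_def xex_def by auto

lemma set12: "{1..2::nat} = {1,2}" by auto

lemma xex_med: "median_mech 2 xex = 0"
  by (simp add: median_mech_def xex_def)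

lemma xex_cg0: "compl_gini 2 xex 0 = 1/2"
  unfolding compl_gini_def gini_util_def set12 by (simp add: util_def xex_def)

lemma xex_cgh: "compl_gini 2 xex (1/2) = 1"
  unfolding compl_gini_def gini_util_def set12 by (simp add: util_def xex_def)

lemma xex_opt: "opt_cgini 2 xex = 1"
proof (rule antisym)
  show "opt_cgini 2 xex \<le> 1" by (rule opt_le1[OF xex_valid])
  have "compl_gini 2 xex (1/2) \<le> opt_cgini 2 xex" unfolding opt_cgini_def
  proof (rule cSUP_upper)
    show "(1/2::real) \<in> {0..1}" by simp
    show "bdd_above (compl_gini 2 xex ` {0..1})"
      by (rule bdd_aboveI[of _ 1]) (auto intro: cg_le1[OF xex_valid])
  qed
  then show "1 \<le> opt_cgini 2 xex" using xex_cgh by simp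
qed

theorem theorem3:
  shows "median_cgini_ratio = 2"
  unfolding median_cgini_ratio_def
proof (rule antisym)
  show "(SUP p\<in>{(n, x). valid_profile n x}.
        ereal (opt_cgini (fst p) (snd p) / compl_gini (fst p) (snd p) (median_mech (fst p) (snd p)))) \<le> 2"
    by (rule SUP_least) (auto intro: ratio_le2)
  have "ereal (opt_cgini (fst (2::nat, xex)) (snd (2::nat, xex)) / compl_gini (fst (2::nat, xex)) (snd (2::nat, xex)) (median_mech (fst (2::nat, xex)) (snd (2::nat, xex))))
     \<le> (SUP p\<in>{(n, x). valid_profile n x}.
        ereal (opt_cgini (fst p) (snd p) / compl_gini (fst p) (snd p) (median_mech (fst p) (snd p))))"
    by (rule SUP_upper) (simp add: xex_valid)
  then show "2 \<le> (SUP p\<in>{(n, x). valid_profile n x}.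
        ereal (opt_cgini (fst p) (snd p) / compl_gini (fst p) (snd p) (median_mech (fst p) (snd p))))"
    by (simp add: xex_opt xex_med xex_cg0)
qed

end
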